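(* Let $R$ be a commutative ring, $m\ge 1$, $A=(a_{ij})\in R^{m\times m}$, $b\in R^m$ and $x=(x_1,\dots,x_m)$. Let $L\in R^{(m+1)\times(m+1)}$ be the matrix with $L_{ij}=a_{ij}$ for $i,j\le m$, $L_{i,m+1}=b_i$ for $i\le m$, $L_{m+1,j}=-\sum_{k=1}^m a_{kj}$ for $j\le m$, and $L_{m+1,m+1}=-\sum_{k=1}^m b_k$. Let $\mathcal{G}$ be a labeled multidigraph (without self-loops, node set $\{1,\dots,m+1\}$) with Laplacian $L$. Then $\det(A)=(-1)^m\Upsilon_\mathcal{G}(m+1)$. Further, if $\det(A)\neq 0$, then the solution to the linear system $Ax+b=0$ is \[x_i=\frac{\Upsilon_\mathcal{G}(i)}{\Upsilon_\mathcal{G}(m+1)}\in\widehat{R},\qquad i=1,\dots,m,\] where $\widehat{R}\supseteq R$ is an extension ring of $R$ in which these quotients are defined.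
   Context: A multidigraph $\mathcal{G}=(\mathcal{N},\mathcal{E})$ consists of finite sets of nodes $\mathcal{N}$ and edges $\mathcal{E}$ with source and target maps $s,t\colon\mathcal{E}\to\mathcal{N}$ (parallel edges allowed); here there are no self-loops and $\mathcal{N}=\{1,\dots,m+1\}$. A labeling is a map $\pi\colon\mathcal{E}\to R$, extended to subsets by $\pi(\mathcal{E}')=\prod_{e\in\mathcal{E}'}\pi(e)$. A tree is a subgraph whose underlying undirected graph is connected and acyclic; it is rooted at a node $N$ if $N$ is its only node without outgoing edges. A spanning tree has node set $\mathcal{N}$ and is identified with its edge set. For $j\in\mathcal{N}$, $\Theta_\mathcal{G}(j)$ is the set of spanning trees of $\mathcal{G}$ rooted at $j$ and $\Upsilon_\mathcal{G}(j)=\sum_{\tau\in\Theta_\mathcal{G}(j)}\pi(\tau)$ (zero if the set is empty). The Laplacian of $\mathcal{G}$ is the $(m+1)\times(m+1)$ matrix with $L_{ij}=\sum_{e:\,s(e)=j,\,t(e)=i}\pi(e)$ for $i\ne j$ and $L_{ii}=-\sum_{k\ne i}L_{ki}$. *)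

theory Defs
  imports "Jordan_Normal_Form.Determinant"
begin

(* A labeled multidigraph: node set N, edge set E (of an arbitrary type 'e),
   source/target maps s t, labeling lbl. *)

definition multidigraph_wf :: "nat set \<Rightarrow> 'e set \<Rightarrow> ('e \<Rightarrow> nat) \<Rightarrow> ('e \<Rightarrow> nat) \<Rightarrow> bool" where
  "multidigraph_wf N E s t \<longleftrightarrow> finite N \<and> finite E \<and> (\<forall>e\<in>E. s e \<in> N \<and> t e \<in> N)"

definition no_self_loops :: "'e set \<Rightarrow> ('e \<Rightarrow> nat) \<Rightarrow> ('e \<Rightarrow> nat) \<Rightarrow> bool" where
  "no_self_loops E s t \<longleftrightarrow> (\<forall>e\<in>E. s e \<noteq> t e)"

definition joins :: "('e \<Rightarrow> nat) \<Rightarrow> ('e \<Rightarrow> nat) \<Rightarrow> 'e \<Rightarrow> nat \<Rightarrow> nat \<Rightarrow> bool" where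
  "joins s t e u v \<longleftrightarrow> (s e = u \<and> t e = v) \<or> (s e = v \<and> t e = u)"

definition und_connected :: "nat set \<Rightarrow> 'e set \<Rightarrow> ('e \<Rightarrow> nat) \<Rightarrow> ('e \<Rightarrow> nat) \<Rightarrow> bool" where
  "und_connected V T s t \<longleftrightarrow>
     (\<forall>u\<in>V. \<forall>v\<in>V. (u, v) \<in> {(x, y). \<exists>e\<in>T. joins s t e x y}\<^sup>*)"

definition und_has_cycle :: "'e set \<Rightarrow> ('e \<Rightarrow> nat) \<Rightarrow> ('e \<Rightarrow> nat) \<Rightarrow> bool" where
  "und_has_cycle T s t \<longleftrightarrow>
     (\<exists>es vs. length es \<ge> 1 \<and> length vs = length es + 1 \<and> distinct es \<and> set es \<subseteq> T \<and>
        vs ! 0 = vs ! length es \<and> distinct (butlast vs) \<and>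
        (\<forall>i < length es. joins s t (es ! i) (vs ! i) (vs ! (i + 1))))"

definition is_tree :: "nat set \<Rightarrow> 'e set \<Rightarrow> ('e \<Rightarrow> nat) \<Rightarrow> ('e \<Rightarrow> nat) \<Rightarrow> bool" where
  "is_tree V T s t \<longleftrightarrow> (\<forall>e\<in>T. s e \<in> V \<and> t e \<in> V) \<and>
     und_connected V T s t \<and> \<not> und_has_cycle T s t"

definition rooted_at :: "nat set \<Rightarrow> 'e set \<Rightarrow> ('e \<Rightarrow> nat) \<Rightarrow> nat \<Rightarrow> bool" where
  "rooted_at V T s j \<longleftrightarrow> j \<in> V \<and> (\<forall>e\<in>T. s e \<noteq> j) \<and> (\<forall>v\<in>V - {j}. \<exists>e\<in>T. s e = v)"

definition spanning_trees_rooted :: "nat set \<Rightarrow> 'e set \<Rightarrow> ('e \<Rightarrow> nat) \<Rightarrow> ('e \<Rightarrow> nat) \<Rightarrow> nat \<Rightarrow> 'e set set" where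
  "spanning_trees_rooted N E s t j = {T. T \<subseteq> E \<and> is_tree N T s t \<and> rooted_at N T s j}"

definition Upsilon :: "nat set \<Rightarrow> 'e set \<Rightarrow> ('e \<Rightarrow> nat) \<Rightarrow> ('e \<Rightarrow> nat) \<Rightarrow> ('e \<Rightarrow> 'a::comm_ring_1) \<Rightarrow> nat \<Rightarrow> 'a" where
  "Upsilon N E s t lbl j = (\<Sum>T\<in>spanning_trees_rooted N E s t j. \<Prod>e\<in>T. lbl e)"

definition lap_offdiag :: "'e set \<Rightarrow> ('e \<Rightarrow> nat) \<Rightarrow> ('e \<Rightarrow> nat) \<Rightarrow> ('e \<Rightarrow> 'a::comm_ring_1) \<Rightarrow> nat \<Rightarrow> nat \<Rightarrow> 'a" where
  "lap_offdiag E s t lbl i j = (\<Sum>e\<in>{e\<in>E. s e = j \<and> t e = i}. lbl e)"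

definition laplacian :: "nat set \<Rightarrow> 'e set \<Rightarrow> ('e \<Rightarrow> nat) \<Rightarrow> ('e \<Rightarrow> nat) \<Rightarrow> ('e \<Rightarrow> 'a::comm_ring_1) \<Rightarrow> nat \<Rightarrow> nat \<Rightarrow> 'a" where
  "laplacian N E s t lbl i j =
     (if i \<noteq> j then lap_offdiag E s t lbl i j
      else - (\<Sum>k\<in>N - {i}. lap_offdiag E s t lbl k i))"

(* The (m+1)x(m+1) matrix L built from A and b, with 1-based indices i j \<in> {1..m+1};
   A and b are 0-based Jordan_Normal_Form objects, so L_ij = A $$ (i-1, j-1). *)
definition Lmat :: "nat \<Rightarrow> 'a::comm_ring_1 mat \<Rightarrow> 'a vec \<Rightarrow> nat \<Rightarrow> nat \<Rightarrow> 'a" where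
  "Lmat m A b i j =
     (if i \<le> m \<and> j \<le> m then A $$ (i - 1, j - 1)
      else if i \<le> m \<and> j = m + 1 then b $ (i - 1)
      else if i = m + 1 \<and> j \<le> m then - (\<Sum>k\<in>{1..m}. A $$ (k - 1, j - 1))
      else - (\<Sum>k\<in>{1..m}. b $ (k - 1)))"

definition is_ring_hom :: "('a::comm_ring_1 \<Rightarrow> 'b::comm_ring_1) \<Rightarrow> bool" where
  "is_ring_hom f \<longleftrightarrow> f 0 = 0 \<and> f 1 = 1 \<and> (\<forall>x y. f (x + y) = f x + f y) \<and> (\<forall>x y. f (x * y) = f x * f y)"

end

theory Submission
  imports Defs
begin


lemma det_colsum_zero:
  fixes Q :: "'a::comm_ring_1 mat"
  assumes Q: "Q \<in> carrier_mat n n" and n: "n > 0"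
    and cs: "\<And>j. j < n \<Longrightarrow> (\<Sum>i\<in>{0..<n}. Q $$ (i,j)) = 0"
  shows "det Q = 0"
proof -
  let ?T = "transpose_mat Q"
  have T: "?T \<in> carrier_mat n n" using Q by simp
  define one where "one = vec n (\<lambda>_. 1::'a)"
  have one: "one \<in> carrier_vec n" unfolding one_def by simp
  have Tone: "?T *\<^sub>v one = 0\<^sub>v n"
  proof (rule eq_vecI)
    fix i assume i: "i < dim_vec (0\<^sub>v n :: 'a vec)"
    then have "(?T *\<^sub>v one) $ i = (\<Sum>k\<in>{0..<n}. Q $$ (k,i))"
      using Q by (simp add: one_def scalar_prod_def)
    also have "\<dots> = 0" using cs i by simp
    finally show "(?T *\<^sub>v one) $ i = 0\<^sub>v n $ i" using i by simp
  qed (use Q in simp)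
  have "(adj_mat ?T * ?T) *\<^sub>v one = adj_mat ?T *\<^sub>v (?T *\<^sub>v one)"
    using adj_mat[OF T] T one by (metis assoc_mult_mat_vec)
  also have "\<dots> = 0\<^sub>v n" unfolding Tone using adj_mat[OF T] by (auto intro!: eq_vecI simp: scalar_prod_def)
  finally have "(det ?T \<cdot>\<^sub>m 1\<^sub>m n) *\<^sub>v one = 0\<^sub>v n" using adj_mat[OF T] by simp
  then have "((det ?T \<cdot>\<^sub>m 1\<^sub>m n) *\<^sub>v one) $ 0 = 0" using n by simp
  moreover have "((det ?T \<cdot>\<^sub>m 1\<^sub>m n) *\<^sub>v one) $ 0 = det ?T"
    using n one by (simp add: one_def)
  ultimately have "det ?T = 0" by simp
  then show ?thesis using det_transpose[OF Q] by simp
qed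

lemma det_expand_cols:
  fixes w :: "'o \<Rightarrow> 'a::comm_ring_1" and c :: "nat \<Rightarrow> nat \<Rightarrow> 'o \<Rightarrow> 'a"
  assumes fin: "\<And>j. j < n \<Longrightarrow> finite (Opt j)"
  shows "det (mat n n (\<lambda>(i,j). \<Sum>x\<in>Opt j. w x * c i j x)) =
         (\<Sum>F\<in>PiE {0..<n} Opt. (\<Prod>j\<in>{0..<n}. w (F j)) * det (mat n n (\<lambda>(i,j). c i j (F j))))"
proof -
  let ?M = "mat n n (\<lambda>(i,j). \<Sum>x\<in>Opt j. w x * c i j x)"
  let ?P = "{p. p permutes {0..<n}}"
  have pl: "p i < n" if "p \<in> ?P" "i < n" for p i
    using that permutes_in_image[of p "{0..<n}" i] by auto
  have "det ?M = det (transpose_mat ?M)" by (rule det_transpose[of _ n, symmetric]) simp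
  also have "\<dots> = (\<Sum>p\<in>?P. signof p * (\<Prod>i\<in>{0..<n}. \<Sum>x\<in>Opt i. w x * c (p i) i x))"
    by (subst det_def'[of _ n]) (auto intro!: sum.cong prod.cong simp: pl)
  also have "\<dots> = (\<Sum>p\<in>?P. \<Sum>F\<in>PiE {0..<n} Opt. signof p * ((\<Prod>i\<in>{0..<n}. w (F i)) * (\<Prod>i\<in>{0..<n}. c (p i) i (F i))))"
    by (subst prod_sum_PiE) (auto simp: fin sum_distrib_left prod.distrib)
  also have "\<dots> = (\<Sum>F\<in>PiE {0..<n} Opt. \<Sum>p\<in>?P. signof p * ((\<Prod>i\<in>{0..<n}. w (F i)) * (\<Prod>i\<in>{0..<n}. c (p i) i (F i))))"
    by (rule sum.swap)
  also have "\<dots> = (\<Sum>F\<in>PiE {0..<n} Opt. (\<Prod>i\<in>{0..<n}. w (F i)) * (\<Sum>p\<in>?P. signof p * (\<Prod>i\<in>{0..<n}. c (p i) i (F i))))"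
    by (auto simp: sum_distrib_left ac_simps intro!: sum.cong)
  also have "\<dots> = (\<Sum>F\<in>PiE {0..<n} Opt. (\<Prod>j\<in>{0..<n}. w (F j)) * det (mat n n (\<lambda>(i,j). c i j (F j))))"
  proof (rule sum.cong[OF refl])
    fix F
    have "det (mat n n (\<lambda>(i,j). c i j (F j))) = det (transpose_mat (mat n n (\<lambda>(i,j). c i j (F j))))"
      by (rule det_transpose[of _ n, symmetric]) simp
    also have "\<dots> = (\<Sum>p\<in>?P. signof p * (\<Prod>i\<in>{0..<n}. c (p i) i (F i)))"
      by (subst det_def'[of _ n]) (auto intro!: sum.cong prod.cong simp: pl)
    finally show "(\<Prod>i\<in>{0..<n}. w (F i)) * (\<Sum>p\<in>?P. signof p * (\<Prod>i\<in>{0..<n}. c (p i) i (F i))) =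
      (\<Prod>j\<in>{0..<n}. w (F j)) * det (mat n n (\<lambda>(i,j). c i j (F j)))" by simp
  qed
  finally show ?thesis .
qed



definition forest_mat :: "nat \<Rightarrow> nat \<Rightarrow> (nat \<Rightarrow> nat) \<Rightarrow> 'a::comm_ring_1 mat" where
  "forest_mat n r nx = mat n n (\<lambda>(i,j). (if i = j then 1 else 0) - (if j \<noteq> r \<and> i = nx j then 1 else 0))"

lemma det_forest_acyclic:
  assumes r: "r < n" and nx: "\<And>j. j < n \<Longrightarrow> j \<noteq> r \<Longrightarrow> nx j < n \<and> nx j \<noteq> j"
    and acyc: "\<forall>j<n. \<exists>k. (nx^^k) j = r"
  shows "det (forest_mat n r nx :: 'a::comm_ring_1 mat) = 1"
proof -
  let ?C = "forest_mat n r nx :: 'a mat"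
  let ?P = "{p. p permutes {0..<n}}"
  have C: "?C \<in> carrier_mat n n" unfolding forest_mat_def by simp
  have pl: "p i < n" if "p permutes {0..<n}" "i < n" for p i
    using that permutes_in_image[of p "{0..<n}" i] by auto
  have zero: "(\<Prod>i\<in>{0..<n}. ?C $$ (i, p i)) = 0" if p: "p permutes {0..<n}" and pid: "p \<noteq> id" for p
  proof (rule ccontr)
    assume nz: "(\<Prod>i\<in>{0..<n}. ?C $$ (i, p i)) \<noteq> 0"
    have nzi: "?C $$ (i, p i) \<noteq> 0" if "i < n" for i
      using nz that by (metis atLeastLessThan_iff finite_atLeastLessThan prod_zero zero_le)
    define S where "S = {i. i < n \<and> p i \<noteq> i}"
    have cl: "j \<noteq> r \<and> nx j \<in> S" if "j \<in> S" for j
    proof -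
      have jn: "j < n" and pj: "p j \<noteq> j" using that by (auto simp: S_def)
      obtain i where i: "p i = j" using permutes_surj[OF p] by (metis surjD)
      have iin: "i < n"
      proof (rule ccontr)
        assume "\<not> i < n"
        then have "p i = i" using permutes_not_in[OF p, of i] by auto
        then show False using i pj by simp
      qed
      have ij: "i \<noteq> j" using i pj by auto
      have "?C $$ (i, j) \<noteq> 0" using nzi[OF iin] i by simp
      then have "j \<noteq> r \<and> i = nx j" using ij iin jn by (auto simp: forest_mat_def split: if_splits)
      then show ?thesis using iin ij i by (auto simp: S_def)
    qed
    obtain a where a: "p a \<noteq> a" using pid by (metis eq_id_iff)
    have an: "a < n" using a permutes_not_in[OF p, of a] by force
    have aS: "a \<in> S" using a an by (simp add: S_def)
    have "(nx^^k) a \<in> S" for k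
      by (induction k) (use aS cl in auto)
    then have "(nx^^k) a \<noteq> r" for k using cl by blast
    then show False using acyc an by blast
  qed
  have "det ?C = (\<Sum>p\<in>?P. signof p * (\<Prod>i\<in>{0..<n}. ?C $$ (i, p i)))"
    by (rule det_def'[OF C])
  also have "\<dots> = signof id * (\<Prod>i\<in>{0..<n}. ?C $$ (i, id i)) + (\<Sum>p\<in>?P - {id}. signof p * (\<Prod>i\<in>{0..<n}. ?C $$ (i, p i)))"
    by (subst sum.remove[of _ id]) (auto simp: permutes_id finite_permutations)
  also have "(\<Sum>p\<in>?P - {id}. signof p * (\<Prod>i\<in>{0..<n}. ?C $$ (i, p i))) = 0"
    by (rule sum.neutral) (use zero in auto)
  also have "(\<Prod>i\<in>{0..<n}. ?C $$ (i, id i)) = 1"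
    by (rule prod.neutral) (use nx in \<open>fastforce simp: forest_mat_def\<close>)
  finally show ?thesis by (simp add: sign_id)
qed

lemma det_forest_cyclic:
  assumes r: "r < n" and nx: "\<And>j. j < n \<Longrightarrow> j \<noteq> r \<Longrightarrow> nx j < n \<and> nx j \<noteq> j"
    and cyc: "j0 < n" "\<forall>k. (nx^^k) j0 \<noteq> r"
  shows "det (forest_mat n r nx :: 'a::comm_ring_1 mat) = 0"
proof -
  let ?C = "forest_mat n r nx :: 'a mat"
  have C: "?C \<in> carrier_mat n n" unfolding forest_mat_def by simp
  have itn: "(nx^^k) j0 < n" for k
    by (induction k) (use cyc nx in auto)
  have "\<not> inj_on (\<lambda>k. (nx^^k) j0) {0..n}"
  proof
    assume inj: "inj_on (\<lambda>k. (nx^^k) j0) {0..n}"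
    have "(\<lambda>k. (nx^^k) j0) ` {0..n} \<subseteq> {0..<n}" using itn by auto
    from card_mono[OF _ this] card_image[OF inj] show False by simp
  qed
  then obtain a b where ab: "a \<le> n" "b \<le> n" "a \<noteq> b" "(nx^^a) j0 = (nx^^b) j0"
    unfolding inj_on_def by auto
  obtain a b where ab: "a < b" "(nx^^a) j0 = (nx^^b) j0"
    using ab by (metis linorder_neqE_nat)
  define u where "u = (nx^^a) j0"
  define d where "d = b - a"
  have d: "d > 0" using ab by (simp add: d_def)
  have ud: "(nx^^d) u = u"
    using ab unfolding u_def d_def by (metis funpow_add le_add_diff_inverse2 less_imp_le comp_apply)
  have itu: "(nx^^k) u < n \<and> (nx^^k) u \<noteq> r" for k
    using itn[of "k + a"] cyc(2)[rule_format, of "k+a"] unfolding u_def by (simp add: funpow_add)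
  define S where "S = (\<lambda>k. (nx^^k) u) ` {0..<d}"
  have finS: "finite S" unfolding S_def by simp
  have Sn: "S \<subseteq> {0..<n}" "r \<notin> S" using itu unfolding S_def by auto
  have img: "nx ` S = S"
  proof
    show "nx ` S \<subseteq> S"
    proof
      fix y assume "y \<in> nx ` S"
      then obtain k where k: "k < d" "y = nx ((nx^^k) u)" unfolding S_def by auto
      show "y \<in> S"
      proof (cases "Suc k < d")
        case True then show ?thesis using k unfolding S_def by (auto intro!: image_eqI[of _ _ "Suc k"])
      next
        case False then have "Suc k = d" using k by simp
        then have "y = u" using k ud by (metis funpow_Suc_right comp_apply funpow_swap1)
        then show ?thesis using d unfolding S_def by (auto intro!: image_eqI[of _ _ 0])
      qed
    qed
    show "S \<subseteq> nx ` S"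
    proof
      fix y assume "y \<in> S"
      then obtain k where k: "k < d" "y = (nx^^k) u" unfolding S_def by auto
      show "y \<in> nx ` S"
      proof (cases k)
        case 0
        then have "y = nx ((nx^^(d - 1)) u)" using k ud d
          by (metis Suc_diff_1 funpow.simps(2) comp_apply funpow_0)
        then show ?thesis unfolding S_def using d by auto
      next
        case (Suc k')
        then show ?thesis using k unfolding S_def by (auto intro!: image_eqI[of _ _ "(nx^^k') u"])
      qed
    qed
  qed
  have injS: "inj_on nx S" by (rule eq_card_imp_inj_on[OF finS]) (simp add: img)
  define x where "x = vec n (\<lambda>i. if i \<in> S then 1 else 0 :: 'a)"
  have x: "x \<in> carrier_vec n" unfolding x_def by simp
  have Cx: "?C *\<^sub>v x = 0\<^sub>v n"
  proof (rule eq_vecI)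
    fix i assume i: "i < dim_vec (0\<^sub>v n :: 'a vec)"
    then have i': "i < n" by simp
    have "(?C *\<^sub>v x) $ i = (\<Sum>j\<in>{0..<n}. ?C $$ (i,j) * x $ j)"
      using i' C x by (simp add: scalar_prod_def)
    also have "\<dots> = (\<Sum>j\<in>S. ?C $$ (i,j))"
      by (rule sum.mono_neutral_cong_right) (use Sn i' in \<open>auto simp: x_def\<close>)
    also have "\<dots> = (\<Sum>j\<in>S. (if i = j then 1 else 0) - (if i = nx j then 1 else 0))"
      by (rule sum.cong) (use Sn i' in \<open>auto simp: forest_mat_def\<close>)
    also have "\<dots> = (\<Sum>j\<in>S. (if i = j then 1 else 0)) - (\<Sum>j\<in>S. (if i = nx j then 1 else 0))"
      by (simp add: sum_subtractf)
    also have "(\<Sum>j\<in>S. (if i = nx j then 1 else 0)) = (\<Sum>j\<in>nx ` S. (if i = j then 1 else (0::'a)))"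
      by (simp add: sum.reindex[OF injS])
    finally show "(?C *\<^sub>v x) $ i = 0\<^sub>v n $ i" using i' img by simp
  qed (use C in simp)
  obtain k where k: "k < d" using d by blast
  have uS: "u \<in> S" using d unfolding S_def by (auto intro!: image_eqI[of _ _ 0])
  have un: "u < n" using Sn uS by auto
  have "(adj_mat ?C * ?C) *\<^sub>v x = adj_mat ?C *\<^sub>v (?C *\<^sub>v x)"
    using adj_mat[OF C] C x by (metis assoc_mult_mat_vec)
  also have "\<dots> = 0\<^sub>v n" unfolding Cx using adj_mat[OF C] by (auto intro!: eq_vecI simp: scalar_prod_def)
  finally have "(det ?C \<cdot>\<^sub>m 1\<^sub>m n) *\<^sub>v x = 0\<^sub>v n" using adj_mat[OF C] by simp
  then have "((det ?C \<cdot>\<^sub>m 1\<^sub>m n) *\<^sub>v x) $ u = 0" using un by simp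
  moreover have "((det ?C \<cdot>\<^sub>m 1\<^sub>m n) *\<^sub>v x) $ u = det ?C * x $ u"
    using un x by simp
  ultimately show ?thesis using uS un by (simp add: x_def)
qed



definition urel :: "'e set \<Rightarrow> ('e \<Rightarrow> nat) \<Rightarrow> ('e \<Rightarrow> nat) \<Rightarrow> (nat \<times> nat) set" where
  "urel T s t = {(x, y). \<exists>e\<in>T. joins s t e x y}"

lemma urel_mono: "T \<subseteq> T' \<Longrightarrow> (x,y) \<in> (urel T s t)\<^sup>* \<Longrightarrow> (x,y) \<in> (urel T' s t)\<^sup>*"
proof -
  assume "T \<subseteq> T'" "(x,y) \<in> (urel T s t)\<^sup>*"
  moreover have "urel T s t \<subseteq> urel T' s t" using \<open>T \<subseteq> T'\<close> unfolding urel_def by auto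
  ultimately show ?thesis using rtrancl_mono by blast
qed

lemma urel_step: "e \<in> T \<Longrightarrow> joins s t e x y \<Longrightarrow> (x,y) \<in> urel T s t"
  unfolding urel_def by auto

lemma urel_sym: "(x,y) \<in> (urel T s t)\<^sup>* \<Longrightarrow> (y,x) \<in> (urel T s t)\<^sup>*"
proof (induction rule: rtrancl_induct)
  case base then show ?case by simp
next
  case (step y z)
  then have "(z,y) \<in> urel T s t" unfolding urel_def joins_def by auto
  then show ?case using step(3) by (rule converse_rtrancl_into_rtrancl)
qed

lemma simple_walk:
  assumes "(u,v) \<in> (urel T s t)\<^sup>*"
  shows "\<exists>es vs. length vs = Suc (length es) \<and> vs!0 = u \<and> last vs = v \<and> distinct vs \<and> set es \<subseteq> T \<and>
          (\<forall>i<length es. joins s t (es!i) (vs!i) (vs!Suc i))"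
  using assms
proof (induction rule: rtrancl_induct)
  case base
  show ?case by (rule exI[of _ "[]"], rule exI[of _ "[u]"]) simp
next
  case (step y z)
  from step(3) obtain es vs where W: "length vs = Suc (length es)" "vs!0 = u" "last vs = y" "distinct vs"
    "set es \<subseteq> T" "\<forall>i<length es. joins s t (es!i) (vs!i) (vs!Suc i)" by blast
  from step(2) obtain e where e: "e \<in> T" "joins s t e y z" unfolding urel_def by auto
  show ?case
  proof (cases "z \<in> set vs")
    case True
    then obtain a where a: "a < length vs" "vs!a = z" by (metis in_set_conv_nth)
    show ?thesis
    proof (rule exI[of _ "take a es"], rule exI[of _ "take (Suc a) vs"], intro conjI)
      show "length (take (Suc a) vs) = Suc (length (take a es))" using a W by simp
      show "take (Suc a) vs ! 0 = u" using W by simp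
      show "last (take (Suc a) vs) = z" using a W
        by (simp add: take_Suc_conv_app_nth)
      show "distinct (take (Suc a) vs)" using W by simp
      show "set (take a es) \<subseteq> T" using W by (meson order_trans set_take_subset)
      show "\<forall>i<length (take a es). joins s t (take a es ! i) (take (Suc a) vs ! i) (take (Suc a) vs ! Suc i)"
        using W a by auto
    qed
  next
    case False
    show ?thesis
    proof (rule exI[of _ "es @ [e]"], rule exI[of _ "vs @ [z]"], intro conjI)
      show "length (vs @ [z]) = Suc (length (es @ [e]))" using W by simp
      show "(vs @ [z]) ! 0 = u" using W by (simp add: nth_append)
      show "last (vs @ [z]) = z" by simp
      show "distinct (vs @ [z])" using W False by simp
      show "set (es @ [e]) \<subseteq> T" using W e by simp
      show "\<forall>i<length (es @ [e]). joins s t ((es @ [e]) ! i) ((vs @ [z]) ! i) ((vs @ [z]) ! Suc i)"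
      proof (intro allI impI)
        fix i assume i: "i < length (es @ [e])"
        show "joins s t ((es @ [e]) ! i) ((vs @ [z]) ! i) ((vs @ [z]) ! Suc i)"
        proof (cases "i < length es")
          case True then show ?thesis using W by (simp add: nth_append)
        next
          case False
          then have ie: "i = length es" using i by simp
          have "vs ! length es = y" using W by (metis diff_Suc_1 last_conv_nth length_0_conv nat.distinct(1))
          then show ?thesis using ie e W by (simp add: nth_append)
        qed
      qed
    qed
  qed
qed

lemma walk_edges_distinct:
  assumes "length vs = Suc (length es)" "distinct vs" "\<forall>i<length es. joins s t (es!i) (vs!i) (vs!Suc i)"
  shows "distinct es"
proof -
  have "es!i \<noteq> es!j" if ij: "i < j" "j < length es" for i j
  proof
    assume eq: "es!i = es!j"
    have ji: "joins s t (es!j) (vs!i) (vs!Suc i)" using assms(3) ij eq by (metis order.strict_trans)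
    have jj: "joins s t (es!j) (vs!j) (vs!Suc j)" using assms(3) ij by simp
    have "vs!i = vs!j \<or> vs!i = vs!Suc j" using ji jj unfolding joins_def by auto
    moreover have "vs!i \<noteq> vs!j" using assms(1,2) ij by (simp add: nth_eq_iff_index_eq)
    moreover have "vs!i \<noteq> vs!Suc j" using assms(1,2) ij by (simp add: nth_eq_iff_index_eq)
    ultimately show False by simp
  qed
  then show ?thesis unfolding distinct_conv_nth by (metis linorder_neqE_nat)
qed

lemma cycle_from_edge:
  assumes e: "e \<in> T" and p: "(t e, s e) \<in> (urel (T - {e}) s t)\<^sup>*"
  shows "und_has_cycle T s t"
proof -
  obtain es vs where W: "length vs = Suc (length es)" "vs!0 = t e" "last vs = s e" "distinct vs"
    "set es \<subseteq> T - {e}" "\<forall>i<length es. joins s t (es!i) (vs!i) (vs!Suc i)"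
    using simple_walk[OF p] by blast
  have des: "distinct es" using walk_edges_distinct[OF W(1) W(4) W(6)] .
  have lastn: "vs ! length es = s e" using W by (metis diff_Suc_1 last_conv_nth length_0_conv nat.distinct(1))
  show ?thesis unfolding und_has_cycle_def
  proof (rule exI[of _ "e # es"], rule exI[of _ "s e # vs"], intro conjI)
    show "1 \<le> length (e # es)" by simp
    show "length (s e # vs) = length (e # es) + 1" using W by simp
    show "distinct (e # es)" using des W by auto
    show "set (e # es) \<subseteq> T" using W e by auto
    show "(s e # vs) ! 0 = (s e # vs) ! length (e # es)" using lastn by simp
    have bl: "butlast (s e # vs) = s e # butlast vs" using W by (cases vs) auto
    have vsd: "vs = butlast vs @ [s e]" using W by (metis append_butlast_last_id length_0_conv nat.distinct(1))
    have "distinct (butlast vs @ [s e])" using W(4) vsd by simp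
    then have "distinct (butlast vs) \<and> s e \<notin> set (butlast vs)" by simp
    then show "distinct (butlast (s e # vs))" using bl by simp
    show "\<forall>i<length (e # es). joins s t ((e # es) ! i) ((s e # vs) ! i) ((s e # vs) ! (i + 1))"
    proof (intro allI impI)
      fix i assume i: "i < length (e # es)"
      show "joins s t ((e # es) ! i) ((s e # vs) ! i) ((s e # vs) ! (i + 1))"
      proof (cases i)
        case 0 then show ?thesis using W by (simp add: joins_def)
      next
        case (Suc i') then show ?thesis using W i by simp
      qed
    qed
  qed
qed



definition nxt :: "('e \<Rightarrow> nat) \<Rightarrow> nat \<Rightarrow> (nat \<Rightarrow> 'e) \<Rightarrow> nat \<Rightarrow> nat" where
  "nxt t \<rho> h w = (if w = \<rho> then \<rho> else t (h w))"

locale gr =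
  fixes N :: "nat set" and E :: "'e set" and s t :: "'e \<Rightarrow> nat" and \<rho> :: nat
  assumes finN: "finite N" and wfE: "\<And>e. e \<in> E \<Longrightarrow> s e \<in> N \<and> t e \<in> N"
    and nsl: "\<And>e. e \<in> E \<Longrightarrow> s e \<noteq> t e" and rho: "\<rho> \<in> N"
begin

lemma reach_path:
  assumes TE: "T' \<subseteq> E" and hT: "\<forall>w\<in>N-{\<rho>}. h w \<in> T' \<and> s (h w) = w"
  shows "x \<in> N \<Longrightarrow> (nxt t \<rho> h ^^ k) x = \<rho> \<Longrightarrow> (x, \<rho>) \<in> (urel T' s t)\<^sup>*"
proof (induction k arbitrary: x)
  case 0 then show ?case by simp
next
  case (Suc k)
  show ?case
  proof (cases "x = \<rho>")
    case True then show ?thesis by simp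
  next
    case False
    have hx: "h x \<in> T'" "s (h x) = x" using hT Suc.prems False by auto
    have gx: "nxt t \<rho> h x = t (h x)" using False by (simp add: nxt_def)
    have gxN: "t (h x) \<in> N" using hx TE wfE by auto
    have "(nxt t \<rho> h ^^ k) (nxt t \<rho> h x) = \<rho>" using Suc.prems(2) by (simp only: funpow_Suc_right comp_apply)
    then have "(t (h x), \<rho>) \<in> (urel T' s t)\<^sup>*"
      using Suc.IH[OF gxN] gx by simp
    moreover have "(x, t (h x)) \<in> urel T' s t" using hx by (intro urel_step[of "h x"]) (auto simp: joins_def)
    ultimately show ?thesis by (meson converse_rtrancl_into_rtrancl)
  qed
qed

lemma tree_reach:
  assumes TE: "T \<subseteq> E" and nc: "\<not> und_has_cycle T s t"
    and hT: "\<forall>w\<in>N-{\<rho>}. h w \<in> T \<and> s (h w) = w"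
  shows "\<forall>v\<in>N. \<exists>k. (nxt t \<rho> h ^^ k) v = \<rho>"
proof (rule ccontr)
  let ?g = "nxt t \<rho> h"
  assume "\<not> ?thesis"
  then obtain v where v: "v \<in> N" "\<forall>k. (?g^^k) v \<noteq> \<rho>" by blast
  have gN: "?g w \<in> N" if "w \<in> N" for w
    using that hT TE wfE rho by (auto simp: nxt_def)
  have itN: "(?g^^k) v \<in> N" for k by (induction k) (use v gN in auto)
  have "\<not> inj_on (\<lambda>k. (?g^^k) v) {0..card N}"
  proof
    assume inj: "inj_on (\<lambda>k. (?g^^k) v) {0..card N}"
    have "(\<lambda>k. (?g^^k) v) ` {0..card N} \<subseteq> N" using itN by auto
    from card_mono[OF finN this] card_image[OF inj] show False by simp
  qed
  then obtain a b where ab0: "a \<noteq> b" "(?g^^a) v = (?g^^b) v"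
    unfolding inj_on_def by auto
  obtain a b where ab: "a < b" "(?g^^a) v = (?g^^b) v"
    using ab0 by (metis linorder_neqE_nat)
  define u where "u = (?g^^a) v"
  have ex: "0 < b - a \<and> (?g^^(b-a)) u = u"
    using ab unfolding u_def by (metis funpow_add le_add_diff_inverse2 less_imp_le comp_apply zero_less_diff)
  define d where "d = (LEAST d. 0 < d \<and> (?g^^d) u = u)"
  have d: "0 < d \<and> (?g^^d) u = u" unfolding d_def by (rule LeastI_ex) (use ex in blast)
  have dmin: "(?g^^j) u \<noteq> u" if "0 < j" "j < d" for j
    using not_less_Least[of j "\<lambda>d. 0 < d \<and> (?g^^d) u = u"] that unfolding d_def by blast
  have itu: "(?g^^j) u \<in> N \<and> (?g^^j) u \<noteq> \<rho>" for j
    using itN[of "j + a"] v(2)[rule_format, of "j + a"] unfolding u_def funpow_add by simp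
  define e where "e = h u"
  have e: "e \<in> T" "s e = u" using hT itu[of 0] unfolding e_def by auto
  have gu: "?g u = t e" using itu[of 0] unfolding e_def by (simp add: nxt_def)
  have path: "1 \<le> j \<longrightarrow> j \<le> d \<longrightarrow> (?g u, (?g^^j) u) \<in> (urel (T - {e}) s t)\<^sup>*" for j
  proof (induction j)
    case 0 then show ?case by simp
  next
    case (Suc j)
    show ?case
    proof (intro impI)
      assume j: "1 \<le> Suc j" "Suc j \<le> d"
      show "(?g u, (?g^^Suc j) u) \<in> (urel (T - {e}) s t)\<^sup>*"
      proof (cases "j = 0")
        case True then show ?thesis by simp
      next
        case False
        define w where "w = (?g^^j) u"
        have w: "w \<in> N" "w \<noteq> \<rho>" "w \<noteq> u" using itu dmin[of j] False j unfolding w_def by auto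
        have hw: "h w \<in> T" "s (h w) = w" using hT w by auto
        have hwe: "h w \<noteq> e" using hw w e by auto
        have step0: "(w, ?g w) \<in> urel (T - {e}) s t"
          using hw hwe w by (intro urel_step[of "h w"]) (auto simp: joins_def nxt_def)
        have "?g w = (?g^^Suc j) u" unfolding w_def by simp
        with step0 have step: "(w, (?g^^Suc j) u) \<in> urel (T - {e}) s t" by simp
        have "(?g u, w) \<in> (urel (T - {e}) s t)\<^sup>*" using Suc.IH False j unfolding w_def by simp
        then show ?thesis using step by (rule rtrancl_into_rtrancl)
      qed
    qed
  qed
  have "(t e, s e) \<in> (urel (T - {e}) s t)\<^sup>*" using path[of d] d gu e by simp
  then have "und_has_cycle T s t" by (rule cycle_from_edge[OF e(1)])
  then show False using nc by simp
qed

lemma tree_uniq: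
  assumes TE: "T \<subseteq> E" and nc: "\<not> und_has_cycle T s t" and ra: "rooted_at N T s \<rho>"
    and e12: "e1 \<in> T" "e2 \<in> T" "s e1 = s e2"
  shows "e1 = e2"
proof (rule ccontr)
  assume ne: "e1 \<noteq> e2"
  define v where "v = s e1"
  have v: "v \<in> N" "v \<noteq> \<rho>" using e12 TE wfE ra unfolding v_def rooted_at_def by auto
  define h where "h = (\<lambda>w. SOME e. e \<in> T \<and> s e = w)(v := e2)"
  have hT: "\<forall>w\<in>N-{\<rho>}. h w \<in> T \<and> s (h w) = w"
  proof
    fix w assume w: "w \<in> N - {\<rho>}"
    show "h w \<in> T \<and> s (h w) = w"
    proof (cases "w = v")
      case True then show ?thesis using e12 unfolding h_def v_def by simp
    next
      case False
      have "\<exists>e. e \<in> T \<and> s e = w" using ra w unfolding rooted_at_def by blast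
      then have "(SOME e. e \<in> T \<and> s e = w) \<in> T \<and> s (SOME e. e \<in> T \<and> s e = w) = w" by (rule someI_ex)
      then show ?thesis using False unfolding h_def by simp
    qed
  qed
  have hT1: "\<forall>w\<in>N-{\<rho>}. h w \<in> T - {e1} \<and> s (h w) = w"
  proof
    fix w assume w: "w \<in> N - {\<rho>}"
    have "h w \<noteq> e1"
    proof (cases "w = v")
      case True then show ?thesis using ne unfolding h_def by simp
    next
      case False then show ?thesis using hT w unfolding v_def by auto
    qed
    then show "h w \<in> T - {e1} \<and> s (h w) = w" using hT w by auto
  qed
  have reach: "\<forall>x\<in>N. \<exists>k. (nxt t \<rho> h ^^ k) x = \<rho>" by (rule tree_reach[OF TE nc hT])
  have TE1: "T - {e1} \<subseteq> E" using TE by auto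
  have p: "(x, \<rho>) \<in> (urel (T - {e1}) s t)\<^sup>*" if "x \<in> N" for x
    using reach that reach_path[OF TE1 hT1 that] by blast
  have "t e1 \<in> N" "s e1 \<in> N" using e12 TE wfE by auto
  then have "(t e1, s e1) \<in> (urel (T - {e1}) s t)\<^sup>*"
    using p urel_sym by (meson rtrancl_trans)
  then have "und_has_cycle T s t" by (rule cycle_from_edge[OF e12(1)])
  then show False using nc by simp
qed

lemma func_tree:
  assumes TE: "T \<subseteq> E"
    and a: "\<forall>e\<in>T. s e \<noteq> \<rho>" and b: "\<forall>v\<in>N-{\<rho>}. \<exists>e\<in>T. s e = v"
    and c: "\<forall>e1\<in>T. \<forall>e2\<in>T. s e1 = s e2 \<longrightarrow> e1 = e2"
    and d: "\<forall>v\<in>N. \<exists>k. (nxt t \<rho> (\<lambda>w. THE e. e \<in> T \<and> s e = w) ^^ k) v = \<rho>"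
  shows "T \<in> spanning_trees_rooted N E s t \<rho>"
proof -
  define h where "h = (\<lambda>w. THE e. e \<in> T \<and> s e = w)"
  let ?g = "nxt t \<rho> h"
  have hT: "\<forall>w\<in>N-{\<rho>}. h w \<in> T \<and> s (h w) = w"
  proof
    fix w assume "w \<in> N - {\<rho>}"
    then obtain e where "e \<in> T" "s e = w" using b by blast
    then have "h w = e" unfolding h_def using c by (intro the_equality) auto
    then show "h w \<in> T \<and> s (h w) = w" using \<open>e \<in> T\<close> \<open>s e = w\<close> by simp
  qed
  have hs: "h (s e) = e" if "e \<in> T" for e
    unfolding h_def using c that by (intro the_equality) auto
  have d': "\<forall>v\<in>N. \<exists>k. (?g ^^ k) v = \<rho>" using d unfolding h_def by simp
  have toroot: "(x, \<rho>) \<in> (urel T s t)\<^sup>*" if "x \<in> N" for x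
    using d' that reach_path[OF TE hT that] by blast
  have conn: "und_connected N T s t"
    unfolding und_connected_def
  proof (intro ballI)
    fix u v assume "u \<in> N" "v \<in> N"
    then have "(u, \<rho>) \<in> (urel T s t)\<^sup>*" "(\<rho>, v) \<in> (urel T s t)\<^sup>*" using toroot urel_sym by (meson, meson)
    then show "(u, v) \<in> {(x, y). \<exists>e\<in>T. joins s t e x y}\<^sup>*" unfolding urel_def by (rule rtrancl_trans)
  qed
  define ht where "ht = (\<lambda>x. LEAST k. (?g^^k) x = \<rho>)"
  have htp: "(?g^^(ht x)) x = \<rho>" "\<And>k. (?g^^k) x = \<rho> \<Longrightarrow> ht x \<le> k" if "x \<in> N" for x
  proof -
    show "(?g^^(ht x)) x = \<rho>" unfolding ht_def by (rule LeastI_ex) (use d' that in blast)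
    show "\<And>k. (?g^^k) x = \<rho> \<Longrightarrow> ht x \<le> k" unfolding ht_def by (rule Least_le)
  qed
  have edge_ht: "ht (s e) = Suc (ht (t e))" if e: "e \<in> T" for e
  proof -
    have sN: "s e \<in> N" and tN: "t e \<in> N" using e TE wfE by auto
    have gs: "?g (s e) = t e" using a e hs by (simp add: nxt_def)
    have "ht (s e) \<noteq> 0" using htp(1)[OF sN] a e by (metis funpow_0)
    then obtain k' where k': "ht (s e) = Suc k'" by (metis not0_implies_Suc)
    have "(?g^^k') (?g (s e)) = \<rho>" using htp(1)[OF sN] unfolding k' funpow_Suc_right comp_apply .
    then have "(?g^^k') (t e) = \<rho>" using gs by simp
    then have le1: "ht (t e) \<le> k'" using htp(2)[OF tN] by blast
    have "(?g^^(Suc (ht (t e)))) (s e) = \<rho>" using htp(1)[OF tN] gs unfolding funpow_Suc_right comp_apply by simp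
    then have le2: "ht (s e) \<le> Suc (ht (t e))" using htp(2)[OF sN] by blast
    show ?thesis using le1 le2 k' by simp
  qed
  have hsrc: "s e = x" if "e \<in> T" "joins s t e x y" "ht y \<le> ht x" for e x y
  proof (rule ccontr)
    assume "s e \<noteq> x"
    then have "s e = y" "t e = x" using that(2) unfolding joins_def by auto
    then show False using edge_ht[OF that(1)] that(3) by simp
  qed
  have nc: "\<not> und_has_cycle T s t"
  proof
    assume "und_has_cycle T s t"
    then obtain es vs where C: "length es \<ge> 1" "length vs = length es + 1" "distinct es" "set es \<subseteq> T"
      "vs ! 0 = vs ! length es" "\<forall>i < length es. joins s t (es ! i) (vs ! i) (vs ! (i + 1))"
      unfolding und_has_cycle_def by blast
    define L where "L = length es"
    have esT: "es!i \<in> T" if "i < L" for i using C(4) that unfolding L_def by auto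
    define H where "H = (\<lambda>i. ht (vs!i)) ` {0..<L}"
    have Hne: "H \<noteq> {}" "finite H" using C(1) unfolding H_def L_def by auto
    obtain k where k: "k < L" "ht (vs!k) = Max H"
      using Max_in[OF Hne(2) Hne(1)] unfolding H_def by auto
    have kmax: "ht (vs!i) \<le> ht (vs!k)" if "i < L" for i
      using Max_ge[OF Hne(2), of "ht (vs!i)"] that k unfolding H_def by auto
    have vsL: "vs!L = vs!0" using C(5) unfolding L_def by simp
    have "ht (vs!Suc k) \<le> ht (vs!k)"
    proof (cases "Suc k < L")
      case True then show ?thesis using kmax by blast
    next
      case False then have "Suc k = L" using k by simp
      then show ?thesis using vsL kmax[of 0] k by simp
    qed
    moreover have "joins s t (es!k) (vs!k) (vs!Suc k)" using C(6) k(1) unfolding L_def by simp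
    ultimately have s1: "s (es!k) = vs!k" using hsrc[OF esT[OF k(1)]] by blast
    define k' where "k' = (if k = 0 then L - 1 else k - 1)"
    have k'L: "k' < L" using k unfolding k'_def by auto
    have vk': "vs!Suc k' = vs!k" using vsL k C(1) unfolding k'_def L_def by auto
    have j': "joins s t (es!k') (vs!k) (vs!k')" using C(6) k'L vk' unfolding L_def joins_def
      by (metis Suc_eq_plus1)
    have s2: "s (es!k') = vs!k" using hsrc[OF esT[OF k'L] j' kmax[OF k'L]] .
    have "es!k = es!k'" using c esT[OF k(1)] esT[OF k'L] s1 s2 by metis
    then have kk: "k = k'" using C(3) k k'L unfolding L_def by (simp add: nth_eq_iff_index_eq)
    then have "k = 0" "L = 1" unfolding k'_def using k by (auto split: if_splits)
    then have "joins s t (es!0) (vs!0) (vs!0)" using C(6) vsL unfolding L_def by (metis One_nat_def add_0 less_one)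
    moreover have "es!0 \<in> E" using esT[of 0] \<open>L = 1\<close> TE by auto
    ultimately show False using nsl unfolding joins_def by metis
  qed
  have "is_tree N T s t" unfolding is_tree_def using TE wfE conn nc by auto
  moreover have "rooted_at N T s \<rho>" unfolding rooted_at_def using rho a b by auto
  ultimately show ?thesis unfolding spanning_trees_rooted_def using TE by auto
qed

lemma tree_func:
  assumes T: "T \<in> spanning_trees_rooted N E s t \<rho>"
  shows "T \<subseteq> E" "\<forall>e\<in>T. s e \<noteq> \<rho>" "\<forall>v\<in>N-{\<rho>}. \<exists>e\<in>T. s e = v"
    "\<forall>e1\<in>T. \<forall>e2\<in>T. s e1 = s e2 \<longrightarrow> e1 = e2"
    "\<forall>v\<in>N. \<exists>k. (nxt t \<rho> (\<lambda>w. THE e. e \<in> T \<and> s e = w) ^^ k) v = \<rho>"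
proof -
  have TE: "T \<subseteq> E" and nc: "\<not> und_has_cycle T s t" and ra: "rooted_at N T s \<rho>"
    using T unfolding spanning_trees_rooted_def is_tree_def by auto
  show "T \<subseteq> E" by (rule TE)
  show "\<forall>e\<in>T. s e \<noteq> \<rho>" "\<forall>v\<in>N-{\<rho>}. \<exists>e\<in>T. s e = v" using ra unfolding rooted_at_def by auto
  show c: "\<forall>e1\<in>T. \<forall>e2\<in>T. s e1 = s e2 \<longrightarrow> e1 = e2" using tree_uniq[OF TE nc ra] by blast
  have hT: "\<forall>w\<in>N-{\<rho>}. (THE e. e \<in> T \<and> s e = w) \<in> T \<and> s (THE e. e \<in> T \<and> s e = w) = w"
  proof
    fix w assume "w \<in> N - {\<rho>}"
    then obtain e where "e \<in> T" "s e = w" using ra unfolding rooted_at_def by blast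
    then have "(THE e. e \<in> T \<and> s e = w) = e" using c by (intro the_equality) auto
    then show "(THE e. e \<in> T \<and> s e = w) \<in> T \<and> s (THE e. e \<in> T \<and> s e = w) = w" using \<open>e \<in> T\<close> \<open>s e = w\<close> by simp
  qed
  show "\<forall>v\<in>N. \<exists>k. (nxt t \<rho> (\<lambda>w. THE e. e \<in> T \<and> s e = w) ^^ k) v = \<rho>"
    by (rule tree_reach[OF TE nc hT])
qed

end



definition optset :: "'e set \<Rightarrow> ('e \<Rightarrow> nat) \<Rightarrow> nat \<Rightarrow> nat \<Rightarrow> 'e option set" where
  "optset E s r j = (if j = r then {None} else Some ` {e\<in>E. s e = Suc j})"

definition wopt :: "('e \<Rightarrow> 'a::comm_ring_1) \<Rightarrow> 'e option \<Rightarrow> 'a" where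
  "wopt lbl x = (case x of None \<Rightarrow> 1 | Some e \<Rightarrow> lbl e)"

definition copt :: "('e \<Rightarrow> nat) \<Rightarrow> nat \<Rightarrow> nat \<Rightarrow> 'e option \<Rightarrow> 'a::comm_ring_1" where
  "copt t i j x = (case x of None \<Rightarrow> (if i = j then 1 else 0)
      | Some e \<Rightarrow> (if i = j then 1 else 0) - (if Suc i = t e then 1 else 0))"

definition nxF :: "('e \<Rightarrow> nat) \<Rightarrow> nat \<Rightarrow> (nat \<Rightarrow> 'e option) \<Rightarrow> nat \<Rightarrow> nat" where
  "nxF t r F j = (if j = r then r else t (the (F j)) - 1)"

definition PsiF :: "nat \<Rightarrow> nat \<Rightarrow> (nat \<Rightarrow> 'e option) \<Rightarrow> 'e set" where
  "PsiF n r F = (\<lambda>j. the (F j)) ` ({0..<n} - {r})"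

locale lgr = gr "{1..n}" E s t \<rho> for n :: nat and E :: "'e set" and s t :: "'e \<Rightarrow> nat" and \<rho> :: nat +
  fixes r :: nat
  assumes finE: "finite E" and rho_r: "\<rho> = Suc r"
begin

lemma r_lt: "r < n" and rho_eq: "\<rho> = Suc r" using rho rho_r by auto

lemma neg_lap:
  assumes i: "i \<in> {1..n}" and j: "j \<in> {1..n}"
  shows "- laplacian {1..n} E s t lbl i j =
    (\<Sum>e\<in>{e\<in>E. s e = j}. lbl e * ((if i = j then 1 else 0) - (if i = t e then 1 else 0)))"
proof (cases "i = j")
  case False
  have "(\<Sum>e\<in>{e\<in>E. s e = j}. lbl e * ((if i = j then 1 else 0) - (if i = t e then 1 else 0)))
      = - (\<Sum>e\<in>{e\<in>E. s e = j}. if t e = i then lbl e else 0)"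
    using False by (auto simp: sum_negf[symmetric] intro!: sum.cong)
  also have "\<dots> = - (\<Sum>e\<in>{e\<in>{e\<in>E. s e = j}. t e = i}. lbl e)"
    using finE by (auto simp: sum.inter_filter intro!: sum.cong)
  also have "{e\<in>{e\<in>E. s e = j}. t e = i} = {e\<in>E. s e = j \<and> t e = i}" by auto
  finally show ?thesis using False by (simp add: laplacian_def lap_offdiag_def)
next
  case True
  have tne: "t e \<noteq> j" if "e \<in> {e\<in>E. s e = j}" for e
  proof -
    from that have "e \<in> E" "s e = j" by auto
    then show ?thesis using nsl[of e] by simp
  qed
  have "(\<Sum>e\<in>{e\<in>E. s e = j}. lbl e * ((if i = j then 1 else 0) - (if i = t e then 1 else 0)))
      = (\<Sum>e\<in>{e\<in>E. s e = j}. lbl e)"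
  proof (rule sum.cong[OF refl])
    fix e assume e: "e \<in> {e\<in>E. s e = j}"
    then have "t e \<noteq> j" by (rule tne)
    then show "lbl e * ((if i = j then 1 else 0) - (if i = t e then 1 else 0)) = lbl e" using True by simp
  qed
  also have "\<dots> = (\<Sum>k\<in>{1..n} - {j}. \<Sum>e\<in>{x\<in>{e\<in>E. s e = j}. t x = k}. lbl e)"
    by (rule sum.group[symmetric]) (use finE wfE tne in auto)
  also have "\<dots> = (\<Sum>k\<in>{1..n} - {j}. lap_offdiag E s t lbl k j)"
    unfolding lap_offdiag_def by (intro sum.cong refl arg_cong[of _ _ "\<lambda>A. sum lbl A"]) auto
  finally show ?thesis using True by (simp add: laplacian_def)
qed

definition Mroot :: "('e \<Rightarrow> 'b::comm_ring_1) \<Rightarrow> 'b mat" where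
  "Mroot lbl = mat n n (\<lambda>(i,j). if j = r then (if i = r then 1 else 0) else - laplacian {1..n} E s t lbl (Suc i) (Suc j))"

lemma fin_opt: "finite (optset E s r j)" unfolding optset_def using finE by auto

lemma Mroot_expand:
  "Mroot lbl = mat n n (\<lambda>(i,j). \<Sum>x\<in>optset E s r j. wopt lbl x * copt t i j x)"
proof (rule eq_matI)
  fix i j assume ij: "i < dim_row (mat n n (\<lambda>(i,j). \<Sum>x\<in>optset E s r j. wopt lbl x * copt t i j x))"
    "j < dim_col (mat n n (\<lambda>(i,j). \<Sum>x\<in>optset E s r j. wopt lbl x * copt t i j x))"
  then have i: "i < n" and j: "j < n" by auto
  show "Mroot lbl $$ (i, j) = mat n n (\<lambda>(i,j). \<Sum>x\<in>optset E s r j. wopt lbl x * copt t i j x) $$ (i, j)"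
  proof (cases "j = r")
    case True then show ?thesis using i j by (simp add: Mroot_def optset_def wopt_def copt_def)
  next
    case False
    have "(\<Sum>x\<in>optset E s r j. wopt lbl x * copt t i j x) =
        (\<Sum>e\<in>{e\<in>E. s e = Suc j}. lbl e * ((if Suc i = Suc j then 1 else 0) - (if Suc i = t e then 1 else 0)))"
      using False by (simp add: optset_def sum.reindex wopt_def copt_def)
    also have "\<dots> = - laplacian {1..n} E s t lbl (Suc i) (Suc j)"
      by (rule neg_lap[symmetric]) (use i j in auto)
    finally show ?thesis using False i j by (simp add: Mroot_def)
  qed
qed (auto simp: Mroot_def)

lemma F_props:
  assumes F: "F \<in> PiE {0..<n} (optset E s r)" and j: "j < n" "j \<noteq> r"
  shows "F j = Some (the (F j))" "the (F j) \<in> E" "s (the (F j)) = Suc j"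
  using PiE_mem[OF F, of j] j by (auto simp: optset_def)

lemma F_r: "F \<in> PiE {0..<n} (optset E s r) \<Longrightarrow> F r = None"
  using PiE_mem[of F "{0..<n}" "optset E s r" r] r_lt by (auto simp: optset_def)

lemma nxF_ok:
  assumes F: "F \<in> PiE {0..<n} (optset E s r)" and j: "j < n" "j \<noteq> r"
  shows "nxF t r F j < n \<and> nxF t r F j \<noteq> j"
proof -
  have "t (the (F j)) \<in> {1..n}" "t (the (F j)) \<noteq> Suc j" using F_props[OF F j] wfE nsl by metis+
  then show ?thesis using j by (auto simp: nxF_def)
qed

lemma nxF_lt: "F \<in> PiE {0..<n} (optset E s r) \<Longrightarrow> j < n \<Longrightarrow> nxF t r F j < n"
  using nxF_ok r_lt by (cases "j = r") (auto simp: nxF_def)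

lemma copt_forest:
  assumes F: "F \<in> PiE {0..<n} (optset E s r)"
  shows "mat n n (\<lambda>(i,j). copt t i j (F j)) = (forest_mat n r (nxF t r F) :: 'a::comm_ring_1 mat)"
proof (rule eq_matI)
  fix i j assume "i < dim_row (forest_mat n r (nxF t r F) :: 'a mat)" "j < dim_col (forest_mat n r (nxF t r F) :: 'a mat)"
  then have i: "i < n" and j: "j < n" by (auto simp: forest_mat_def)
  show "mat n n (\<lambda>(i,j). copt t i j (F j)) $$ (i, j) = (forest_mat n r (nxF t r F) :: 'a mat) $$ (i, j)"
  proof (cases "j = r")
    case True then show ?thesis using i j F_r[OF F] by (simp add: forest_mat_def copt_def)
  next
    case False
    have "t (the (F j)) \<in> {1..n}" using F_props[OF F j False] wfE by metis
    then have "(Suc i = t (the (F j))) = (i = t (the (F j)) - 1)" by auto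
    moreover obtain e where Fj: "F j = Some e" using F_props(1)[OF F j False] by blast
    ultimately show ?thesis using i j False by (simp add: forest_mat_def copt_def nxF_def Fj)
  qed
qed (auto simp: forest_mat_def)

definition acyc :: "(nat \<Rightarrow> 'e option) \<Rightarrow> bool" where
  "acyc F \<longleftrightarrow> (\<forall>j<n. \<exists>k. (nxF t r F ^^ k) j = r)"

lemma det_Mroot_acyc:
  fixes lbl :: "'e \<Rightarrow> 'a::comm_ring_1"
  shows "det (Mroot lbl) = (\<Sum>F\<in>{F\<in>PiE {0..<n} (optset E s r). acyc F}. \<Prod>j\<in>{0..<n}. wopt lbl (F j))"
proof -
  have "det (Mroot lbl) = (\<Sum>F\<in>PiE {0..<n} (optset E s r). (\<Prod>j\<in>{0..<n}. wopt lbl (F j)) * det (mat n n (\<lambda>(i,j). copt t i j (F j))))"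
    unfolding Mroot_expand by (rule det_expand_cols) (rule fin_opt)
  also have "\<dots> = (\<Sum>F\<in>PiE {0..<n} (optset E s r). if acyc F then (\<Prod>j\<in>{0..<n}. wopt lbl (F j)) else 0)"
  proof (rule sum.cong[OF refl])
    fix F assume F: "F \<in> PiE {0..<n} (optset E s r)"
    show "(\<Prod>j\<in>{0..<n}. wopt lbl (F j)) * det (mat n n (\<lambda>(i,j). copt t i j (F j))) =
      (if acyc F then (\<Prod>j\<in>{0..<n}. wopt lbl (F j)) else 0)"
    proof (cases "acyc F")
      case True
      have "det (forest_mat n r (nxF t r F) :: 'a mat) = 1"
        by (rule det_forest_acyclic[OF r_lt]) (use nxF_ok[OF F] True in \<open>auto simp: acyc_def\<close>)
      then have "det (mat n n (\<lambda>(i,j). copt t i j (F j)) :: 'a mat) = 1" using copt_forest[OF F] by metis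
      then show ?thesis using True by simp
    next
      case False
      then obtain j0 where "j0 < n" "\<forall>k. (nxF t r F ^^ k) j0 \<noteq> r" unfolding acyc_def by blast
      then have "det (forest_mat n r (nxF t r F) :: 'a mat) = 0"
        by (intro det_forest_cyclic[OF r_lt]) (use nxF_ok[OF F] in auto)
      then have "det (mat n n (\<lambda>(i,j). copt t i j (F j)) :: 'a mat) = 0" using copt_forest[OF F] by metis
      then show ?thesis using False by simp
    qed
  qed
  also have "\<dots> = (\<Sum>F\<in>{F\<in>PiE {0..<n} (optset E s r). acyc F}. \<Prod>j\<in>{0..<n}. wopt lbl (F j))"
    by (rule sum.inter_filter[symmetric]) (rule finite_PiE, simp, rule fin_opt)
  finally show ?thesis .
qed

end



context lgr begin


lemma psi_edge_inj:
  assumes F: "F \<in> (PiE {0..<n} (optset E s r))"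
  shows "inj_on (\<lambda>j. the (F j)) ({0..<n}-{r})"
proof (rule inj_onI)
  fix i j assume i: "i \<in> {0..<n}-{r}" and j: "j \<in> {0..<n}-{r}" and eq: "the (F i) = the (F j)"
  have a1: "s (the (F i)) = Suc i" using F_props(3)[OF F, of i] i by simp
  have a2: "s (the (F j)) = Suc j" using F_props(3)[OF F, of j] j by simp
  from a1 a2 eq show "i = j" by (metis nat.inject)
qed

lemma prod_wopt:
  assumes F: "F \<in> (PiE {0..<n} (optset E s r))"
  shows "(\<Prod>j\<in>{0..<n}. wopt lbl (F j)) = (\<Prod>e\<in>PsiF n r F. lbl e)"
proof -
  have "(\<Prod>j\<in>{0..<n}. wopt lbl (F j)) = wopt lbl (F r) * (\<Prod>j\<in>{0..<n}-{r}. wopt lbl (F j))"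
    by (rule prod.remove) (use r_lt in auto)
  also have "wopt lbl (F r) = 1" using F_r[OF F] by (simp add: wopt_def)
  also have "(\<Prod>j\<in>{0..<n}-{r}. wopt lbl (F j)) = (\<Prod>j\<in>{0..<n}-{r}. lbl (the (F j)))"
  proof (rule prod.cong[OF refl])
    fix j assume "j \<in> {0..<n}-{r}"
    then have "F j = Some (the (F j))" using F_props(1)[OF F] by auto
    then show "wopt lbl (F j) = lbl (the (F j))" by (metis option.simps(5) wopt_def)
  qed
  also have "\<dots> = (\<Prod>e\<in>PsiF n r F. lbl e)"
    unfolding PsiF_def by (rule prod.reindex[symmetric, unfolded comp_def], rule psi_edge_inj[OF F])
  finally show ?thesis by simp
qed

lemma THE_psi:
  assumes F: "F \<in> (PiE {0..<n} (optset E s r))" and j: "j < n" "j \<noteq> r"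
  shows "(THE e. e \<in> PsiF n r F \<and> s e = Suc j) = the (F j)"
proof (rule the_equality)
  show "the (F j) \<in> PsiF n r F \<and> s (the (F j)) = Suc j" using F_props[OF F j] j unfolding PsiF_def by auto
next
  fix e assume e: "e \<in> PsiF n r F \<and> s e = Suc j"
  then obtain j' where j': "j' \<in> {0..<n}-{r}" "e = the (F j')" unfolding PsiF_def by blast
  then have "s e = Suc j'" using F_props(3)[OF F] by auto
  then have "j' = j" using e by simp
  then show "e = the (F j)" using j' by simp
qed


lemma nxt_psi:
  assumes F: "F \<in> (PiE {0..<n} (optset E s r))" and j: "j < n"
  shows "nxt t \<rho> (\<lambda>w. THE e. e \<in> PsiF n r F \<and> s e = w) (Suc j) = Suc (nxF t r F j)"
proof (cases "j = r")
  case True then show ?thesis using rho_eq by (simp add: nxt_def nxF_def)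
next
  case False
  have "t (the (F j)) \<in> {1..n}" using F_props[OF F j False] wfE by metis
  then show ?thesis using False rho_eq THE_psi[OF F j False] by (auto simp: nxt_def nxF_def)
qed

lemma iter_lt: "F \<in> (PiE {0..<n} (optset E s r)) \<Longrightarrow> j < n \<Longrightarrow> (nxF t r F ^^ k) j < n"
  by (induction k) (auto simp: nxF_lt)

lemma iter_psi: "F \<in> (PiE {0..<n} (optset E s r)) \<Longrightarrow> j < n \<Longrightarrow> (nxt t \<rho> (\<lambda>w. THE e. e \<in> PsiF n r F \<and> s e = w) ^^ k) (Suc j) = Suc ((nxF t r F ^^ k) j)"
proof (induction k)
  case 0 then show ?case by simp
next
  case (Suc k)
  then show ?case using nxt_psi[OF Suc.prems(1) iter_lt[OF Suc.prems]] by simp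
qed

lemma acyc_iff:
  assumes F: "F \<in> (PiE {0..<n} (optset E s r))"
  shows "acyc F \<longleftrightarrow> (\<forall>v\<in>{1..n}. \<exists>k. (nxt t \<rho> (\<lambda>w. THE e. e \<in> PsiF n r F \<and> s e = w) ^^ k) v = \<rho>)"
proof
  assume a: "acyc F"
  show "\<forall>v\<in>{1..n}. \<exists>k. (nxt t \<rho> (\<lambda>w. THE e. e \<in> PsiF n r F \<and> s e = w) ^^ k) v = \<rho>"
  proof
    fix v assume v: "v \<in> {1..n}"
    then obtain j where j: "v = Suc j" "j < n" by (cases v) auto
    obtain k where "(nxF t r F ^^ k) j = r" using a j unfolding acyc_def by blast
    then show "\<exists>k. (nxt t \<rho> (\<lambda>w. THE e. e \<in> PsiF n r F \<and> s e = w) ^^ k) v = \<rho>" using iter_psi[OF F j(2), of k] j rho_eq by auto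
  qed
next
  assume a: "\<forall>v\<in>{1..n}. \<exists>k. (nxt t \<rho> (\<lambda>w. THE e. e \<in> PsiF n r F \<and> s e = w) ^^ k) v = \<rho>"
  show "acyc F" unfolding acyc_def
  proof (intro allI impI)
    fix j assume j: "j < n"
    have "Suc j \<in> {1..n}" using j by simp
    then obtain k where "(nxt t \<rho> (\<lambda>w. THE e. e \<in> PsiF n r F \<and> s e = w) ^^ k) (Suc j) = \<rho>" using a by blast
    then have "(nxF t r F ^^ k) j = r" using iter_psi[OF F j, of k] rho_eq by simp
    then show "\<exists>k. (nxF t r F ^^ k) j = r" by blast
  qed
qed

lemma psi_tree:
  assumes F: "F \<in> (PiE {0..<n} (optset E s r))" and a: "acyc F"
  shows "PsiF n r F \<in> spanning_trees_rooted {1..n} E s t \<rho>"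
proof (rule func_tree)
  show "PsiF n r F \<subseteq> E"
  proof
    fix e assume "e \<in> PsiF n r F"
    then obtain j where "j \<in> {0..<n}-{r}" "e = the (F j)" unfolding PsiF_def by blast
    then show "e \<in> E" using F_props(2)[OF F] by auto
  qed
  show "\<forall>e\<in>PsiF n r F. s e \<noteq> \<rho>" unfolding PsiF_def using F_props[OF F] rho_eq by auto
  show "\<forall>v\<in>{1..n}-{\<rho>}. \<exists>e\<in>PsiF n r F. s e = v"
  proof
    fix v assume v: "v \<in> {1..n}-{\<rho>}"
    then obtain j where j: "v = Suc j" "j < n" "j \<noteq> r" using rho_eq
      by (cases v) auto
    then show "\<exists>e\<in>PsiF n r F. s e = v" using F_props[OF F j(2,3)] unfolding PsiF_def by auto
  qed
  show "\<forall>e1\<in>PsiF n r F. \<forall>e2\<in>PsiF n r F. s e1 = s e2 \<longrightarrow> e1 = e2"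
    unfolding PsiF_def using F_props[OF F] by auto
  show "\<forall>v\<in>{1..n}. \<exists>k. (nxt t \<rho> (\<lambda>w. THE e. e \<in> PsiF n r F \<and> s e = w) ^^ k) v = \<rho>" using acyc_iff[OF F] a by blast
qed

lemma psi_inj: "inj_on (PsiF n r) {F \<in> (PiE {0..<n} (optset E s r)). acyc F}"
proof (rule inj_onI)
  fix F G assume F: "F \<in> {F \<in> (PiE {0..<n} (optset E s r)). acyc F}" and G: "G \<in> {F \<in> (PiE {0..<n} (optset E s r)). acyc F}" and eq: "PsiF n r F = PsiF n r G"
  have F': "F \<in> (PiE {0..<n} (optset E s r))" and G': "G \<in> (PiE {0..<n} (optset E s r))" using F G by auto
  show "F = G"
  proof (rule PiE_ext[OF F' G'])
    fix j assume j: "j \<in> {0..<n}"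
    show "F j = G j"
    proof (cases "j = r")
      case True then show ?thesis using F_r[OF F'] F_r[OF G'] by simp
    next
      case False
      have jn: "j < n" using j by simp
      have "the (F j) = (THE e. e \<in> PsiF n r F \<and> s e = Suc j)" using THE_psi[OF F' jn False] by simp
      also have "\<dots> = the (G j)" using THE_psi[OF G' jn False] eq by simp
      finally show ?thesis using F_props(1)[OF F' jn False] F_props(1)[OF G' jn False] by metis
    qed
  qed
qed

lemma psi_surj:
  assumes T: "T \<in> spanning_trees_rooted {1..n} E s t \<rho>"
  shows "T \<in> PsiF n r ` {F \<in> (PiE {0..<n} (optset E s r)). acyc F}"
proof -
  note tf = tree_func[OF T]
  define F where "F = (\<lambda>j. if j < n then (if j = r then None else Some (THE e. e \<in> T \<and> s e = Suc j)) else undefined)"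
  have the_ok: "(THE e. e \<in> T \<and> s e = Suc j) \<in> T \<and> s (THE e. e \<in> T \<and> s e = Suc j) = Suc j"
    if j: "j < n" "j \<noteq> r" for j
  proof -
    have "Suc j \<in> {1..n}-{\<rho>}" using j rho_eq by simp
    then obtain e where e: "e \<in> T" "s e = Suc j" using tf(3) by blast
    then have "(THE e. e \<in> T \<and> s e = Suc j) = e" using tf(4) by (intro the_equality) auto
    then show ?thesis using e by simp
  qed
  have F: "F \<in> (PiE {0..<n} (optset E s r))"
  proof (rule PiE_I)
    fix j assume j: "j \<in> {0..<n}"
    show "F j \<in> optset E s r j"
    proof (cases "j = r")
      case True then show ?thesis using j by (simp add: F_def optset_def)
    next
      case False
      have "(THE e. e \<in> T \<and> s e = Suc j) \<in> {e \<in> E. s e = Suc j}" using the_ok[OF _ False] j tf(1) by auto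
      then show ?thesis using j False by (simp add: F_def optset_def)
    qed
  next
    fix j assume "j \<notin> {0..<n}" then show "F j = undefined" by (simp add: F_def)
  qed
  have psi: "PsiF n r F = T"
  proof
    show "PsiF n r F \<subseteq> T"
    proof
      fix e assume "e \<in> PsiF n r F"
      then obtain j where j: "j \<in> {0..<n}-{r}" "e = the (F j)" unfolding PsiF_def by blast
      then show "e \<in> T" using the_ok[of j] by (simp add: F_def)
    qed
    show "T \<subseteq> PsiF n r F"
    proof
      fix e assume e: "e \<in> T"
      have "s e \<in> {1..n}" "s e \<noteq> \<rho>" using e tf(1,2) wfE by auto
      then obtain j where j: "s e = Suc j" "j < n" "j \<noteq> r" using rho_eq
        by (cases "s e") auto
      have "(THE e'. e' \<in> T \<and> s e' = Suc j) = e" using tf(4) e j by (intro the_equality) auto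
      then show "e \<in> PsiF n r F" unfolding PsiF_def F_def using j by (auto intro!: image_eqI[of _ _ j])
    qed
  qed
  have "acyc F" using acyc_iff[OF F] tf(5) psi by simp
  then show ?thesis using F psi by auto
qed

theorem det_Mroot:
  fixes lbl :: "'e \<Rightarrow> 'a::comm_ring_1"
  shows "det (Mroot lbl) = Upsilon {1..n} E s t lbl \<rho>"
proof -
  have bij: "bij_betw (PsiF n r) {F \<in> (PiE {0..<n} (optset E s r)). acyc F} (spanning_trees_rooted {1..n} E s t \<rho>)"
    unfolding bij_betw_def using psi_inj psi_tree psi_surj by blast
  have "det (Mroot lbl) = (\<Sum>F\<in>{F \<in> (PiE {0..<n} (optset E s r)). acyc F}. \<Prod>j\<in>{0..<n}. wopt lbl (F j))"
    by (rule det_Mroot_acyc)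
  also have "\<dots> = (\<Sum>F\<in>{F \<in> (PiE {0..<n} (optset E s r)). acyc F}. \<Prod>e\<in>PsiF n r F. lbl e)"
    by (rule sum.cong) (auto simp: prod_wopt)
  also have "\<dots> = (\<Sum>T\<in>spanning_trees_rooted {1..n} E s t \<rho>. \<Prod>e\<in>T. lbl e)"
    by (rule sum.reindex_bij_betw[OF bij])
  finally show ?thesis unfolding Upsilon_def .
qed

end



lemma det_Rc:
  fixes K :: "'a::comm_ring_1 mat"
  assumes K: "K \<in> carrier_mat n n" and j: "j < n"
  shows "det (mat n n (\<lambda>(i,k). if k = j then v i else K $$ (i,k))) = (\<Sum>i<n. v i * cofactor K i j)"
proof -
  let ?R = "mat n n (\<lambda>(i,k). if k = j then v i else K $$ (i,k))"
  have R: "?R \<in> carrier_mat n n" by simp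
  have del: "mat_delete ?R i j = mat_delete K i j" if i: "i < n" for i
    by (rule eq_matI) (use K j i in \<open>auto simp: mat_delete_def\<close>)
  have "det ?R = (\<Sum>i<n. ?R $$ (i,j) * cofactor ?R i j)" by (rule laplace_expansion_column[OF R j])
  also have "\<dots> = (\<Sum>i<n. v i * cofactor K i j)"
    by (rule sum.cong) (use j del in \<open>auto simp: cofactor_def\<close>)
  finally show ?thesis .
qed

lemma lap_colsum:
  fixes lbl :: "'e \<Rightarrow> 'a::comm_ring_1"
  assumes j: "j \<in> {1..n}"
  shows "(\<Sum>i\<in>{1..n}. laplacian {1..n} E s t lbl i j) = 0"
proof -
  have "(\<Sum>i\<in>{1..n}. laplacian {1..n} E s t lbl i j) =
      laplacian {1..n} E s t lbl j j + (\<Sum>i\<in>{1..n}-{j}. laplacian {1..n} E s t lbl i j)"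
    by (rule sum.remove) (use j in auto)
  also have "(\<Sum>i\<in>{1..n}-{j}. laplacian {1..n} E s t lbl i j) = (\<Sum>i\<in>{1..n}-{j}. lap_offdiag E s t lbl i j)"
    by (rule sum.cong) (auto simp: laplacian_def)
  finally show ?thesis by (simp add: laplacian_def)
qed

lemma graph_facts:
  fixes lbl :: "'e \<Rightarrow> 'a::comm_ring_1"
  assumes wf: "multidigraph_wf {1..n} E s t" and nsl: "no_self_loops E s t" and n: "n > 0"
  defines "K \<equiv> mat n n (\<lambda>(i,j). - laplacian {1..n} E s t lbl (Suc i) (Suc j))"
  shows "\<And>r. r < n \<Longrightarrow> Upsilon {1..n} E s t lbl (Suc r) = cofactor K r r"
    and "\<And>i. i < n \<Longrightarrow> (\<Sum>k<n. laplacian {1..n} E s t lbl (Suc i) (Suc k) * Upsilon {1..n} E s t lbl (Suc k)) = 0"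
proof -
  have K: "K \<in> carrier_mat n n" unfolding K_def by simp
  have ups: "Upsilon {1..n} E s t lbl (Suc r) = cofactor K r r" if r: "r < n" for r
  proof -
    interpret lgr n E s t "Suc r" r
      by unfold_locales (use wf nsl r in \<open>auto simp: multidigraph_wf_def no_self_loops_def\<close>)
    have "Upsilon {1..n} E s t lbl (Suc r) = det (Mroot lbl)" by (rule det_Mroot[symmetric])
    also have "Mroot lbl = mat n n (\<lambda>(i,k). if k = r then (if i = r then 1 else 0) else K $$ (i,k))"
      unfolding Mroot_def K_def by (rule eq_matI) auto
    also have "det \<dots> = (\<Sum>i<n. (if i = r then 1 else 0) * cofactor K i r)"
      by (rule det_Rc[OF K r])
    also have "\<dots> = (\<Sum>i<n. if i = r then cofactor K i r else 0)" by (rule sum.cong) auto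
    also have "\<dots> = cofactor K r r" using r by (simp add: sum.delta)
    finally show ?thesis .
  qed
  then show "\<And>r. r < n \<Longrightarrow> Upsilon {1..n} E s t lbl (Suc r) = cofactor K r r" by blast
  have csK: "(\<Sum>i\<in>{0..<n}. K $$ (i,j)) = 0" if j: "j < n" for j
  proof -
    have "(\<Sum>i\<in>{0..<n}. K $$ (i,j)) = - (\<Sum>i\<in>{0..<n}. laplacian {1..n} E s t lbl (Suc i) (Suc j))"
      using j by (simp add: K_def sum_negf)
    also have "(\<Sum>i\<in>{0..<n}. laplacian {1..n} E s t lbl (Suc i) (Suc j)) = (\<Sum>i\<in>{1..n}. laplacian {1..n} E s t lbl i (Suc j))"
    proof (rule sum.reindex_cong[of Suc, symmetric])
      show "inj_on Suc {0..<n}" by simp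
      have "Suc ` {0..<n} = {Suc 0..<Suc n}" by (simp add: image_Suc_atLeastLessThan)
      then show "{1..n} = Suc ` {0..<n}" by auto
    qed simp
    also have "(\<Sum>i\<in>{1..n}. laplacian {1..n} E s t lbl i (Suc j)) = 0" by (rule lap_colsum) (use j in auto)
    finally show ?thesis by simp
  qed
  have indep: "cofactor K r j = cofactor K j j" if r: "r < n" and j: "j < n" for r j
  proof -
    let ?Q = "mat n n (\<lambda>(i,k). if k = j then (if i = r then 1 else 0) - (if i = j then 1 else 0) else K $$ (i,k))"
    have "det ?Q = (\<Sum>i<n. ((if i = r then 1 else 0) - (if i = j then 1 else 0)) * cofactor K i j)"
      by (rule det_Rc[OF K j])
    also have "\<dots> = (\<Sum>i<n. (if i = r then cofactor K i j else 0)) - (\<Sum>i<n. (if i = j then cofactor K i j else 0))"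
      by (subst sum_subtractf[symmetric]) (rule sum.cong, auto simp: left_diff_distrib)
    also have "\<dots> = cofactor K r j - cofactor K j j"
      using r j by (simp add: sum.delta)
    finally have eq: "det ?Q = cofactor K r j - cofactor K j j" .
    have "det ?Q = 0"
    proof (rule det_colsum_zero[of _ n])
      show "?Q \<in> carrier_mat n n" by simp
      show "0 < n" by (rule n)
      fix k assume k: "k < n"
      show "(\<Sum>i\<in>{0..<n}. ?Q $$ (i, k)) = 0"
      proof (cases "k = j")
        case True
        then have "(\<Sum>i\<in>{0..<n}. ?Q $$ (i, k)) = (\<Sum>i\<in>{0..<n}. (if i = r then 1 else 0) - (if i = j then 1 else 0))"
          using k by (intro sum.cong) auto
        also have "\<dots> = 0" using r j by (simp add: sum_subtractf)
        finally show ?thesis .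
      next
        case False
        then have "(\<Sum>i\<in>{0..<n}. ?Q $$ (i, k)) = (\<Sum>i\<in>{0..<n}. K $$ (i,k))"
          using k by (intro sum.cong) auto
        then show ?thesis using csK[OF k] by simp
      qed
    qed
    then show ?thesis using eq by simp
  qed
  have detK: "det K = 0" by (rule det_colsum_zero[OF K n csK])
  fix i assume i: "i < n"
  have "(K * adj_mat K) $$ (i, 0) = 0" using adj_mat(2)[OF K] detK i n by simp
  moreover have "(K * adj_mat K) $$ (i, 0) = (\<Sum>k<n. K $$ (i,k) * cofactor K 0 k)"
    using K i n adj_mat(1)[OF K] by (simp add: scalar_prod_def adj_mat_def atLeast0LessThan)
  ultimately have "(\<Sum>k<n. K $$ (i,k) * Upsilon {1..n} E s t lbl (Suc k)) = 0"
    using indep[OF n] ups by (simp add: atLeast0LessThan)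
  then have "(\<Sum>k<n. - (laplacian {1..n} E s t lbl (Suc i) (Suc k) * Upsilon {1..n} E s t lbl (Suc k))) = 0"
    using i by (simp add: K_def)
  then show "(\<Sum>k<n. laplacian {1..n} E s t lbl (Suc i) (Suc k) * Upsilon {1..n} E s t lbl (Suc k)) = 0"
    by (simp add: sum_negf)
qed



theorem proposition2p2:
  fixes m :: nat
    and A :: "'a::comm_ring_1 mat" and b :: "'a vec"
    and E :: "'e set" and s t :: "'e \<Rightarrow> nat" and lbl :: "'e \<Rightarrow> 'a"
    and phi :: "'a \<Rightarrow> 'b::comm_ring_1"
  assumes "m \<ge> 1"
    and "A \<in> carrier_mat m m" and "b \<in> carrier_vec m"
    and "multidigraph_wf {1..m+1} E s t" and "no_self_loops E s t"
    and "\<forall>i\<in>{1..m+1}. \<forall>j\<in>{1..m+1}. laplacian {1..m+1} E s t lbl i j = Lmat m A b i j"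
  shows "det A = (-1) ^ m * Upsilon {1..m+1} E s t lbl (m + 1) \<and>
         (det A \<noteq> 0 \<longrightarrow> is_ring_hom phi \<longrightarrow> inj phi \<longrightarrow>
           phi (Upsilon {1..m+1} E s t lbl (m + 1)) dvd 1 \<longrightarrow>
           (\<forall>x :: 'b vec. x \<in> carrier_vec m \<longrightarrow>
              (map_mat phi A *\<^sub>v x + map_vec phi b = 0\<^sub>v m \<longleftrightarrow>
               (\<forall>i\<in>{1..m}. x $ (i - 1) * phi (Upsilon {1..m+1} E s t lbl (m + 1))
                             = phi (Upsilon {1..m+1} E s t lbl i)))))"
proof -
  note A = assms(2) and b = assms(3) and wf = assms(4) and nsl = assms(5) and lapL = assms(6)
  define U where "U = Upsilon {1..m+1} E s t lbl"
  define K where "K = mat (m+1) (m+1) (\<lambda>(i,j). - laplacian {1..m+1} E s t lbl (Suc i) (Suc j))"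
  have n: "m + 1 > 0" by simp
  note gf = graph_facts[where n="m+1" and E=E and s=s and t=t and lbl=lbl, OF wf nsl n, folded K_def]
  have lapA: "laplacian {1..m+1} E s t lbl (Suc i) (Suc k) = A $$ (i,k)" if "i < m" "k < m" for i k
    using lapL that by (auto simp: Lmat_def)
  have lapb: "laplacian {1..m+1} E s t lbl (Suc i) (Suc m) = b $ i" if "i < m" for i
    using lapL that by (auto simp: Lmat_def)
  have delK: "mat_delete K m m = (-1) \<cdot>\<^sub>m A"
    by (rule eq_matI) (use A lapA in \<open>auto simp: mat_delete_def K_def\<close>)
  have "U (m+1) = cofactor K m m" using gf(1)[of m] unfolding U_def by simp
  also have "\<dots> = (-1)^(m+m) * det ((-1) \<cdot>\<^sub>m A)" unfolding cofactor_def delK by simp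
  also have "\<dots> = (-1)^m * det A" using A by (simp add: power_add)
  finally have U1: "U (m+1) = (-1)^m * det A" .
  have part1: "det A = (-1)^m * U (m+1)"
    unfolding U1 by (simp add: power_mult_distrib[symmetric])
  have kern: "(\<Sum>k<m. A $$ (i,k) * U (Suc k)) + b $ i * U (m+1) = 0" if i: "i < m" for i
  proof -
    have "(\<Sum>k<m+1. laplacian {1..m+1} E s t lbl (Suc i) (Suc k) * U (Suc k)) = 0"
      using gf(2)[of i] i unfolding U_def by simp
    then show ?thesis using i lapA lapb by simp
  qed
  show ?thesis
  proof (intro conjI impI allI)
    show "det A = (-1) ^ m * Upsilon {1..m+1} E s t lbl (m + 1)" using part1 unfolding U_def by simp
    fix x :: "'b vec"
    assume hom: "is_ring_hom phi" and "phi (Upsilon {1..m+1} E s t lbl (m + 1)) dvd 1" and x: "x \<in> carrier_vec m"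
    then have udvd: "phi (U (m+1)) dvd 1" unfolding U_def by simp
    interpret ph: comm_ring_hom phi
      by unfold_locales (use hom in \<open>auto simp: is_ring_hom_def\<close>)
    define u where "u = phi (U (m+1))"
    obtain w where uw: "u * w = 1" using udvd unfolding u_def dvd_def by (metis mult.commute)
    define B where "B = map_mat phi A"
    define c where "c = map_vec phi b"
    have B: "B \<in> carrier_mat m m" using A unfolding B_def by simp
    have c: "c \<in> carrier_vec m" using b unfolding c_def by simp
    define y where "y = vec m (\<lambda>i. phi (U (Suc i)) * w)"
    have y: "y \<in> carrier_vec m" unfolding y_def by simp
    have By: "B *\<^sub>v y + c = 0\<^sub>v m"
    proof (rule eq_vecI)
      fix i assume "i < dim_vec (0\<^sub>v m :: 'b vec)"
      then have i: "i < m" by simp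
      have "(B *\<^sub>v y) $ i = (\<Sum>k\<in>{0..<m}. phi (A $$ (i,k)) * (phi (U (Suc k)) * w))"
        using i A B by (simp add: B_def y_def scalar_prod_def)
      also have "\<dots> = w * phi (\<Sum>k<m. A $$ (i,k) * U (Suc k))"
        by (simp add: hom_distribs sum_distrib_left atLeast0LessThan ac_simps)
      also have "(\<Sum>k<m. A $$ (i,k) * U (Suc k)) = - (b $ i * U (m+1))"
        using kern[OF i] by (simp add: eq_neg_iff_add_eq_0)
      also have "w * phi (- (b $ i * U (m+1))) = - phi (b $ i) * (u * w)"
        by (simp add: hom_distribs u_def ac_simps)
      finally have "(B *\<^sub>v y) $ i = - phi (b $ i)" using uw by simp
      then show "(B *\<^sub>v y + c) $ i = 0\<^sub>v m $ i" using i b B by (simp add: c_def)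
    qed (use B c in simp)
    have detB: "det B = (-1)^m * u"
      unfolding B_def u_def using part1 by (simp add: hom_distribs)
    have uniq: "z = y" if z: "z \<in> carrier_vec m" and Bz: "B *\<^sub>v z + c = 0\<^sub>v m" for z
    proof -
      have d0: "B *\<^sub>v (z - y) = 0\<^sub>v m"
      proof (rule eq_vecI)
        fix i assume "i < dim_vec (0\<^sub>v m :: 'b vec)"
        then have i: "i < m" by simp
        have e1: "row B i \<bullet> z + c $ i = 0" using arg_cong[OF Bz, of "\<lambda>v. v $ i"] i c B by simp
        have e2: "row B i \<bullet> y + c $ i = 0" using arg_cong[OF By, of "\<lambda>v. v $ i"] i c B by simp
        from e1 e2 have "row B i \<bullet> z = row B i \<bullet> y" by (metis add_right_cancel)
        then have "(B *\<^sub>v z) $ i = (B *\<^sub>v y) $ i" using i B by simp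
        moreover have "B *\<^sub>v (z - y) = B *\<^sub>v z - B *\<^sub>v y" using B z y by (simp add: mult_minus_distrib_mat_vec)
        ultimately show "(B *\<^sub>v (z - y)) $ i = 0\<^sub>v m $ i" using i B by simp
      qed (use B in simp)
      have zy: "z - y \<in> carrier_vec m" using z y by simp
      have "(adj_mat B * B) *\<^sub>v (z - y) = adj_mat B *\<^sub>v (B *\<^sub>v (z - y))"
        using adj_mat[OF B] B zy by (metis assoc_mult_mat_vec)
      also have "\<dots> = 0\<^sub>v m" unfolding d0 using adj_mat[OF B] by (auto intro!: eq_vecI simp: scalar_prod_def)
      finally have eq0: "(det B \<cdot>\<^sub>m 1\<^sub>m m) *\<^sub>v (z - y) = 0\<^sub>v m" using adj_mat[OF B] by simp
      show "z = y"
      proof (rule eq_vecI)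
        fix i assume "i < dim_vec y"
        then have i: "i < m" using y by simp
        have "((det B \<cdot>\<^sub>m 1\<^sub>m m) *\<^sub>v (z - y)) $ i = det B * (z $ i - y $ i)" using i zy z y by simp
        then have "det B * (z $ i - y $ i) = 0" using eq0 i by simp
        then have "((-1)^m * w) * (((-1)^m * u) * (z $ i - y $ i)) = 0" unfolding detB by simp
        then have "((-1)^m * w) * ((-1)^m * u) * (z $ i - y $ i) = 0" by (simp only: mult.assoc)
        moreover have "((-1)^m * w) * ((-1)^m * u) = (1 :: 'b)"
          using uw by (simp add: ac_simps power_mult_distrib[symmetric])
        ultimately show "z $ i = y $ i" by simp
      qed (use z y in simp)
    qed
    show "map_mat phi A *\<^sub>v x + map_vec phi b = 0\<^sub>v m \<longleftrightarrow>
        (\<forall>i\<in>{1..m}. x $ (i - 1) * phi (Upsilon {1..m+1} E s t lbl (m + 1)) = phi (Upsilon {1..m+1} E s t lbl i))"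
    proof
      assume "map_mat phi A *\<^sub>v x + map_vec phi b = 0\<^sub>v m"
      then have "x = y" using uniq[OF x] unfolding B_def c_def by simp
      show "\<forall>i\<in>{1..m}. x $ (i - 1) * phi (Upsilon {1..m+1} E s t lbl (m + 1)) = phi (Upsilon {1..m+1} E s t lbl i)"
      proof
        fix i assume i: "i \<in> {1..m}"
        then have "x $ (i - 1) = phi (U i) * w" using \<open>x = y\<close> by (cases i) (auto simp: y_def)
        then show "x $ (i - 1) * phi (Upsilon {1..m+1} E s t lbl (m + 1)) = phi (Upsilon {1..m+1} E s t lbl i)"
        proof -
          have "x $ (i - 1) * u = phi (U i) * (u * w)" using \<open>x $ (i - 1) = phi (U i) * w\<close> by (simp add: ac_simps)
          then show ?thesis using uw unfolding U_def u_def by simp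
        qed
      qed
    next
      assume h: "\<forall>i\<in>{1..m}. x $ (i - 1) * phi (Upsilon {1..m+1} E s t lbl (m + 1)) = phi (Upsilon {1..m+1} E s t lbl i)"
      have "x = y"
      proof (rule eq_vecI)
        fix k assume "k < dim_vec y"
        then have k: "k < m" using y by simp
        have "x $ k * u = phi (U (Suc k))" using h[rule_format, of "Suc k"] k unfolding U_def u_def by simp
        then have "x $ k * (u * w) = phi (U (Suc k)) * w" by (metis mult.assoc)
        then show "x $ k = y $ k" using uw k by (simp add: y_def)
      qed (use x y in simp)
      then show "map_mat phi A *\<^sub>v x + map_vec phi b = 0\<^sub>v m" using By unfolding B_def c_def by simp
    qed
  qed
qed


end
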